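(* Let $p\colon E\to B$ be an arc-covering. Then the following are equivalent: (a) $p$ is an arc-hedgehog covering; (b) for every $e_0\in E$ and every open subset $U$ of $E$ containing $e_0$, there is a neighborhood $V$ of $b_0=p(e_0)$ in $B$ such that the path component of $p^{-1}(V)$ containing $e_0$ is a subset of $U$.
   Context: All maps are continuous. A Peano space is a connected, locally path-connected space. For a class $\mathcal{P}$ of spaces, a map $p\colon E\to B$ is a $\mathcal{P}$-covering if for every $e_0\in E$, every $X\in\mathcal{P}$, every $x_0\in X$ and every map $f\colon X\to B$ with $f(x_0)=p(e_0)$ there is a map $g\colon X\to E$ with $p\circ g=f$ and $g(x_0)=e_0$, and such lifts are unique ($g=h$ whenever $g,h\colon X\to E$, $p\circ g=p\circ h$ and $g(x_0)=h(x_0)$ for some $x_0\in X$). An arc-covering is a $\mathcal{P}$-covering for $\mathcal{P}=\{[0,1]\}$. A directed wedge is the wedge $(Z,z_0)=\bigvee_{s\in S}(Z_s,z_s)$ of pointed Peano spaces indexed by a directed set $S$, with the topology: $U\subset Z\setminus\{z_0\}$ is open iff $U\cap Z_s$ is open in $Z_s$ for every $s$; a set $U\ni z_0$ is an open neighborhood of $z_0$ iff $U\cap Z_s$ is open in $Z_s$ for every $s$ and there is $t\in S$ with $Z_s\subset U$ for all $s>t$. An arc-hedgehog is a directed wedge in which each $(Z_s,z_s)$ is homeomorphic to $([0,1],0)$. An arc-hedgehog covering is a $\mathcal{P}$-covering where $\mathcal{P}$ is the class of all arc-hedgehogs. *)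

theory Defs
  imports "HOL-Analysis.Analysis"
begin

definition P_covering ::
  "'x topology set \<Rightarrow> 'e topology \<Rightarrow> 'b topology \<Rightarrow> ('e \<Rightarrow> 'b) \<Rightarrow> bool" where
  "P_covering P E B p \<longleftrightarrow>
     continuous_map E B p \<and>
     (\<forall>e0\<in>topspace E. \<forall>X\<in>P. \<forall>x0\<in>topspace X. \<forall>f.
        continuous_map X B f \<and> f x0 = p e0 \<longrightarrow>
        (\<exists>g. continuous_map X E g \<and> (\<forall>x\<in>topspace X. p (g x) = f x) \<and> g x0 = e0)) \<and>
     (\<forall>X\<in>P. \<forall>g h. continuous_map X E g \<and> continuous_map X E h \<and>
        (\<forall>x\<in>topspace X. p (g x) = p (h x)) \<and> (\<exists>x0\<in>topspace X. g x0 = h x0) \<longrightarrow>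
        (\<forall>x\<in>topspace X. g x = h x))"

definition arc_covering :: "'e topology \<Rightarrow> 'b topology \<Rightarrow> ('e \<Rightarrow> 'b) \<Rightarrow> bool" where
  "arc_covering E B p \<longleftrightarrow> P_covering {top_of_set {0..1::real}} E B p"

definition directed_set :: "'s set \<Rightarrow> ('s \<Rightarrow> 's \<Rightarrow> bool) \<Rightarrow> bool" where
  "directed_set S le \<longleftrightarrow> S \<noteq> {} \<and> (\<forall>s\<in>S. le s s) \<and>
     (\<forall>a\<in>S. \<forall>b\<in>S. \<forall>c\<in>S. le a b \<and> le b c \<longrightarrow> le a c) \<and>
     (\<forall>a\<in>S. \<forall>b\<in>S. \<exists>c\<in>S. le a c \<and> le b c)"

(* The arc-hedgehog over the directed set (S, le): the directed wedge of copies
   ([0,1],0) indexed by S.  Base point is None; the point t of spike s is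
   Some (s,t) for t \<in> {0<..1}, and t = 0 is identified with the base point. *)
definition spike_pt :: "'s \<Rightarrow> real \<Rightarrow> ('s \<times> real) option" where
  "spike_pt s t = (if t = 0 then None else Some (s, t))"

definition hedgehog_carrier :: "'s set \<Rightarrow> ('s \<times> real) option set" where
  "hedgehog_carrier S = insert None (Some ` (S \<times> {0<..1}))"

definition arc_hedgehog :: "'s set \<Rightarrow> ('s \<Rightarrow> 's \<Rightarrow> bool) \<Rightarrow> ('s \<times> real) option topology" where
  "arc_hedgehog S le = topology (\<lambda>U.
     U \<subseteq> hedgehog_carrier S \<and>
     (\<forall>s\<in>S. openin (top_of_set {0..1::real}) {t\<in>{0..1}. spike_pt s t \<in> U}) \<and>
     (None \<in> U \<longrightarrow>
        (\<exists>t\<in>S. \<forall>s\<in>S. (le t s \<and> \<not> le s t) \<longrightarrow> spike_pt s ` {0..1} \<subseteq> U)))"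

definition arc_hedgehog_covering ::
  "'s itself \<Rightarrow> 'e topology \<Rightarrow> 'b topology \<Rightarrow> ('e \<Rightarrow> 'b) \<Rightarrow> bool" where
  "arc_hedgehog_covering (_ :: 's itself) E B p \<longleftrightarrow>
     P_covering {arc_hedgehog S le | (S :: 's set) le. directed_set S le} E B p"

definition small_path_components :: "'e topology \<Rightarrow> 'b topology \<Rightarrow> ('e \<Rightarrow> 'b) \<Rightarrow> bool" where
  "small_path_components E B p \<longleftrightarrow>
     (\<forall>e0\<in>topspace E. \<forall>U. openin E U \<and> e0 \<in> U \<longrightarrow>
        (\<exists>V. (\<exists>W. openin B W \<and> p e0 \<in> W \<and> W \<subseteq> V) \<and> V \<subseteq> topspace B \<and>
             path_component_of_set (subtopology E {e\<in>topspace E. p e \<in> V}) e0 \<subseteq> U))"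

end

theory Submission
  imports Defs
begin

definition hh_open :: "'s set \<Rightarrow> ('s \<Rightarrow> 's \<Rightarrow> bool) \<Rightarrow> ('s \<times> real) option set \<Rightarrow> bool" where
  "hh_open S le U \<longleftrightarrow>
     U \<subseteq> hedgehog_carrier S \<and>
     (\<forall>s\<in>S. openin (top_of_set {0..1::real}) {t\<in>{0..1}. spike_pt s t \<in> U}) \<and>
     (None \<in> U \<longrightarrow>
        (\<exists>t\<in>S. \<forall>s\<in>S. (le t s \<and> \<not> le s t) \<longrightarrow> spike_pt s ` {0..1} \<subseteq> U))"

lemma spike_in_carrier: "s \<in> S \<Longrightarrow> u \<in> {0..1} \<Longrightarrow> spike_pt s u \<in> hedgehog_carrier S"
  by (auto simp: spike_pt_def hedgehog_carrier_def)

lemma carrier_cases: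
  assumes "x \<in> hedgehog_carrier S"
  obtains "x = None" | s u where "s \<in> S" "u \<in> {0<..1}" "x = spike_pt s u"
  using assms by (auto simp: spike_pt_def hedgehog_carrier_def)

lemma istopology_hh:
  assumes "directed_set S le"
  shows "istopology (hh_open S le)"
  unfolding istopology_def
proof (intro conjI allI impI)
  fix U V assume U: "hh_open S le U" and V: "hh_open S le V"
  show "hh_open S le (U \<inter> V)"
    unfolding hh_open_def
  proof (intro conjI ballI impI)
    show "U \<inter> V \<subseteq> hedgehog_carrier S" using U by (auto simp: hh_open_def)
    fix s assume "s \<in> S"
    then have "openin (top_of_set {0..1::real}) ({t\<in>{0..1}. spike_pt s t \<in> U} \<inter> {t\<in>{0..1}. spike_pt s t \<in> V})"
      using U V by (auto simp: hh_open_def)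
    moreover have "{t\<in>{0..1}. spike_pt s t \<in> U} \<inter> {t\<in>{0..1}. spike_pt s t \<in> V} = {t\<in>{0..1}. spike_pt s t \<in> U \<inter> V}"
      by auto
    ultimately show "openin (top_of_set {0..1::real}) {t\<in>{0..1}. spike_pt s t \<in> U \<inter> V}" by simp
  next
    assume "None \<in> U \<inter> V"
    have "None \<in> U" "None \<in> V" using \<open>None \<in> U \<inter> V\<close> by auto
    have "\<exists>t\<in>S. \<forall>s\<in>S. (le t s \<and> \<not> le s t) \<longrightarrow> spike_pt s ` {0..1} \<subseteq> U"
      using U \<open>None \<in> U\<close> unfolding hh_open_def by blast
    then obtain t1 where t1: "t1 \<in> S" "\<forall>s\<in>S. (le t1 s \<and> \<not> le s t1) \<longrightarrow> spike_pt s ` {0..1} \<subseteq> U"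
      by blast
    have "\<exists>t\<in>S. \<forall>s\<in>S. (le t s \<and> \<not> le s t) \<longrightarrow> spike_pt s ` {0..1} \<subseteq> V"
      using V \<open>None \<in> V\<close> unfolding hh_open_def by blast
    then obtain t2 where t2: "t2 \<in> S" "\<forall>s\<in>S. (le t2 s \<and> \<not> le s t2) \<longrightarrow> spike_pt s ` {0..1} \<subseteq> V"
      by blast
    have ub: "\<forall>a\<in>S. \<forall>b\<in>S. \<exists>c\<in>S. le a c \<and> le b c" using assms unfolding directed_set_def by blast
    obtain c where c: "c \<in> S" "le t1 c" "le t2 c" using ub t1(1) t2(1) by blast
    show "\<exists>t\<in>S. \<forall>s\<in>S. (le t s \<and> \<not> le s t) \<longrightarrow> spike_pt s ` {0..1} \<subseteq> U \<inter> V"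
    proof (intro bexI[OF _ c(1)] ballI impI)
      fix s assume s: "s \<in> S" "le c s \<and> \<not> le s c"
      have tr: "\<And>a b d. a \<in> S \<Longrightarrow> b \<in> S \<Longrightarrow> d \<in> S \<Longrightarrow> le a b \<Longrightarrow> le b d \<Longrightarrow> le a d"
        using assms unfolding directed_set_def by blast
      have "le t1 s \<and> \<not> le s t1" using tr[of t1 c s] tr[of s t1 c] s c t1(1) by blast
      moreover have "le t2 s \<and> \<not> le s t2" using tr[of t2 c s] tr[of s t2 c] s c t2(1) by blast
      ultimately have "spike_pt s ` {0..1} \<subseteq> U" "spike_pt s ` {0..1} \<subseteq> V" using t1(2) t2(2) s(1) by auto
      then show "spike_pt s ` {0..1} \<subseteq> U \<inter> V" by blast
    qed
  qed
next
  fix K assume K: "\<forall>U\<in>K. hh_open S le U"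
  show "hh_open S le (\<Union>K)"
    unfolding hh_open_def
  proof (intro conjI ballI impI)
    show "\<Union>K \<subseteq> hedgehog_carrier S" using K by (auto simp: hh_open_def)
    fix s assume "s \<in> S"
    then have "openin (top_of_set {0..1::real}) (\<Union>U\<in>K. {t\<in>{0..1}. spike_pt s t \<in> U})"
      using K by (intro openin_Union) (auto simp: hh_open_def)
    moreover have "(\<Union>U\<in>K. {t\<in>{0..1}. spike_pt s t \<in> U}) = {t\<in>{0..1}. spike_pt s t \<in> \<Union>K}"
      by auto
    ultimately show "openin (top_of_set {0..1::real}) {t\<in>{0..1}. spike_pt s t \<in> \<Union>K}" by simp
  next
    assume "None \<in> \<Union>K"
    then obtain U where "U \<in> K" "None \<in> U" by auto
    then obtain t where "t \<in> S" "\<forall>s\<in>S. (le t s \<and> \<not> le s t) \<longrightarrow> spike_pt s ` {0..1} \<subseteq> U"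
      using K by (auto simp: hh_open_def)
    then show "\<exists>t\<in>S. \<forall>s\<in>S. (le t s \<and> \<not> le s t) \<longrightarrow> spike_pt s ` {0..1} \<subseteq> \<Union>K"
      using \<open>U \<in> K\<close> by blast
  qed
qed


lemma openin_hh:
  assumes "directed_set S le"
  shows "openin (arc_hedgehog S le) U \<longleftrightarrow> hh_open S le U"
proof -
  have "arc_hedgehog S le = topology (hh_open S le)"
    unfolding arc_hedgehog_def hh_open_def[abs_def] by simp
  then show ?thesis using istopology_hh[OF assms] by simp
qed

lemma topspace_hh:
  assumes "directed_set S le"
  shows "topspace (arc_hedgehog S le) = hedgehog_carrier S"
proof -
  have "hh_open S le (hedgehog_carrier S)"
    unfolding hh_open_def
  proof (intro conjI ballI impI)
    fix s assume "s \<in> S"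
    then have "{t\<in>{0..1}. spike_pt s t \<in> hedgehog_carrier S} = {0..1::real}"
      using spike_in_carrier[of s S] by auto
    then show "openin (top_of_set {0..1::real}) {t\<in>{0..1}. spike_pt s t \<in> hedgehog_carrier S}"
      by simp
  next
    obtain t where "t \<in> S" using assms unfolding directed_set_def by blast
    moreover have "\<forall>s\<in>S. spike_pt s ` {0..1} \<subseteq> hedgehog_carrier S"
      using spike_in_carrier by fastforce
    ultimately show "\<exists>t\<in>S. \<forall>s\<in>S. (le t s \<and> \<not> le s t) \<longrightarrow> spike_pt s ` {0..1} \<subseteq> hedgehog_carrier S"
      by blast
  qed simp
  then have "openin (arc_hedgehog S le) (hedgehog_carrier S)" using openin_hh[OF assms] by simp
  moreover have "\<And>U. openin (arc_hedgehog S le) U \<Longrightarrow> U \<subseteq> hedgehog_carrier S"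
    using openin_hh[OF assms] by (auto simp: hh_open_def)
  ultimately show ?thesis unfolding topspace_def by auto
qed

lemma spike_cont:
  assumes "directed_set S le" "s \<in> S"
  shows "continuous_map (top_of_set {0..1::real}) (arc_hedgehog S le) (spike_pt s)"
  unfolding continuous_map_def
proof (intro conjI allI impI)
  show "spike_pt s \<in> topspace (top_of_set {0..1}) \<rightarrow> topspace (arc_hedgehog S le)"
    using spike_in_carrier[OF assms(2)] topspace_hh[OF assms(1)] by auto
  fix U assume "openin (arc_hedgehog S le) U"
  then show "openin (top_of_set {0..1}) {x \<in> topspace (top_of_set {0..1}). spike_pt s x \<in> U}"
    using openin_hh[OF assms(1)] assms(2) by (auto simp: hh_open_def)
qed

abbreviation "I01 \<equiv> top_of_set {0..1::real}"

lemma arc_cont: "arc_covering E B p \<Longrightarrow> continuous_map E B p"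
  unfolding arc_covering_def P_covering_def by blast

lemma arc_lift:
  assumes "arc_covering E B p" "e \<in> topspace E" "x0 \<in> {0..1}" "continuous_map I01 B f" "f x0 = p e"
  shows "\<exists>g. continuous_map I01 E g \<and> (\<forall>x\<in>{0..1}. p (g x) = f x) \<and> g x0 = e"
proof -
  have "\<forall>e0\<in>topspace E. \<forall>x0\<in>topspace I01. \<forall>f.
        continuous_map I01 B f \<and> f x0 = p e0 \<longrightarrow>
        (\<exists>g. continuous_map I01 E g \<and> (\<forall>x\<in>topspace I01. p (g x) = f x) \<and> g x0 = e0)"
    using assms(1) unfolding arc_covering_def P_covering_def by blast
  then show ?thesis using assms(2-5) by simp
qed

lemma arc_uniq:
  assumes "arc_covering E B p" "continuous_map I01 E g" "continuous_map I01 E h"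
    "\<forall>x\<in>{0..1}. p (g x) = p (h x)" "x0 \<in> {0..1}" "g x0 = h x0" "x \<in> {0..1}"
  shows "g x = h x"
proof -
  have "\<forall>g h. continuous_map I01 E g \<and> continuous_map I01 E h \<and>
        (\<forall>x\<in>topspace I01. p (g x) = p (h x)) \<and> (\<exists>x0\<in>topspace I01. g x0 = h x0) \<longrightarrow>
        (\<forall>x\<in>topspace I01. g x = h x)"
    using assms(1) unfolding arc_covering_def P_covering_def by blast
  moreover have "\<exists>x0\<in>topspace I01. g x0 = h x0" using assms(5,6) by auto
  ultimately have "\<forall>x\<in>topspace I01. g x = h x" using assms(2-4) by auto
  then show ?thesis using assms(7) by auto
qed

lemma cmap_in_top: "continuous_map X Y f \<Longrightarrow> x \<in> topspace X \<Longrightarrow> f x \<in> topspace Y"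
  by (meson continuous_map_def funcset_mem)

lemma spike0: "spike_pt s 0 = None" by (simp add: spike_pt_def)

lemma hh_uniq:
  assumes ac: "arc_covering E B p" and ds: "directed_set S le"
    and g: "continuous_map (arc_hedgehog S le) E g" and h: "continuous_map (arc_hedgehog S le) E h"
    and ph: "\<forall>x\<in>topspace (arc_hedgehog S le). p (g x) = p (h x)"
    and x0: "x0 \<in> topspace (arc_hedgehog S le)" and gh: "g x0 = h x0"
    and x: "x \<in> topspace (arc_hedgehog S le)"
  shows "g x = h x"
proof -
  have sp: "g (spike_pt s u) = h (spike_pt s u)"
    if s: "s \<in> S" and u: "u \<in> {0..1}" and a: "a \<in> {0..1}" and ga: "g (spike_pt s a) = h (spike_pt s a)" for s u a
  proof -
    have c1: "continuous_map I01 E (g \<circ> spike_pt s)"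
      by (rule continuous_map_compose[OF spike_cont[OF ds s] g])
    have c2: "continuous_map I01 E (h \<circ> spike_pt s)"
      by (rule continuous_map_compose[OF spike_cont[OF ds s] h])
    have "\<forall>x\<in>{0..1}. p ((g \<circ> spike_pt s) x) = p ((h \<circ> spike_pt s) x)"
      using ph spike_in_carrier[OF s] topspace_hh[OF ds] by auto
    from arc_uniq[OF ac c1 c2 this a _ u] ga show ?thesis by simp
  qed
  have base: "g None = h None"
    using x0 unfolding topspace_hh[OF ds]
  proof (cases rule: carrier_cases)
    case 1 then show ?thesis using gh by simp
  next
    case (2 s u)
    then show ?thesis using sp[of s 0 u] gh by (simp add: spike0)
  qed
  show ?thesis
    using x unfolding topspace_hh[OF ds]
  proof (cases rule: carrier_cases)
    case 1 then show ?thesis using base by simp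
  next
    case (2 s u)
    then show ?thesis using sp[of s u 0] base by (simp add: spike0)
  qed
qed

lemma hh_lift_base:
  assumes ac: "arc_covering E B p" and sp: "small_path_components E B p"
    and ds: "directed_set S le"
    and f: "continuous_map (arc_hedgehog S le) B f"
    and e: "e \<in> topspace E" and fe: "p e = f None"
  shows "\<exists>g. continuous_map (arc_hedgehog S le) E g \<and>
             (\<forall>x\<in>topspace (arc_hedgehog S le). p (g x) = f x) \<and> g None = e"
proof -
  let ?X = "arc_hedgehog S le"
  have "\<forall>s\<in>S. \<exists>l. continuous_map I01 E l \<and> (\<forall>u\<in>{0..1}. p (l u) = f (spike_pt s u)) \<and> l 0 = e"
  proof
    fix s assume s: "s \<in> S"
    have "continuous_map I01 B (f \<circ> spike_pt s)"
      by (rule continuous_map_compose[OF spike_cont[OF ds s] f])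
    from arc_lift[OF ac e _ this] fe show "\<exists>l. continuous_map I01 E l \<and> (\<forall>u\<in>{0..1}. p (l u) = f (spike_pt s u)) \<and> l 0 = e"
      by (simp add: spike0)
  qed
  then obtain L where L: "\<And>s. s \<in> S \<Longrightarrow> continuous_map I01 E (L s)"
      "\<And>s u. s \<in> S \<Longrightarrow> u \<in> {0..1} \<Longrightarrow> p (L s u) = f (spike_pt s u)"
      "\<And>s. s \<in> S \<Longrightarrow> L s 0 = e"
    by metis
  define G where "G x = (case x of None \<Rightarrow> e | Some (s, u) \<Rightarrow> L s u)" for x
  have GN: "G None = e" by (simp add: G_def)
  have Gs: "G (spike_pt s u) = L s u" if "s \<in> S" "u \<in> {0..1}" for s u
    using that L(3) by (auto simp: G_def spike_pt_def)
  have Gtop: "G x \<in> topspace E" if "x \<in> topspace ?X" for x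
    using that unfolding topspace_hh[OF ds]
  proof (cases rule: carrier_cases)
    case 1 then show ?thesis using e GN by simp
  next
    case (2 s u) then show ?thesis using Gs[of s u] cmap_in_top[OF L(1), of s u] by auto
  qed
  have Glift: "p (G x) = f x" if "x \<in> topspace ?X" for x
    using that unfolding topspace_hh[OF ds]
  proof (cases rule: carrier_cases)
    case 1 then show ?thesis using fe GN by simp
  next
    case (2 s u) then show ?thesis using Gs[of s u] L(2)[of s u] by auto
  qed
  have Gcont: "continuous_map ?X E G"
    unfolding continuous_map_def
  proof (intro conjI allI impI)
    show "G \<in> topspace ?X \<rightarrow> topspace E" using Gtop by blast
    fix Q assume Q: "openin E Q"
    show "openin ?X {x \<in> topspace ?X. G x \<in> Q}"
      unfolding openin_hh[OF ds] hh_open_def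
    proof (intro conjI ballI impI)
      show "{x \<in> topspace ?X. G x \<in> Q} \<subseteq> hedgehog_carrier S" using topspace_hh[OF ds] by blast
      fix s assume s: "s \<in> S"
      have "{t \<in> {0..1}. spike_pt s t \<in> {x \<in> topspace ?X. G x \<in> Q}} = {t \<in> topspace I01. L s t \<in> Q}"
        using Gs[OF s] spike_in_carrier[OF s] topspace_hh[OF ds] by auto
      moreover have "openin I01 {t \<in> topspace I01. L s t \<in> Q}"
        using L(1)[OF s] Q unfolding continuous_map_def by blast
      ultimately show "openin I01 {t \<in> {0..1}. spike_pt s t \<in> {x \<in> topspace ?X. G x \<in> Q}}"
        by simp
    next
      assume "None \<in> {x \<in> topspace ?X. G x \<in> Q}"
      then have eO: "e \<in> Q" using GN by simp
      obtain V W where W: "openin B W" "p e \<in> W" "W \<subseteq> V" and V: "V \<subseteq> topspace B"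
        and pc: "path_component_of_set (subtopology E {e\<in>topspace E. p e \<in> V}) e \<subseteq> Q"
        using sp e Q eO unfolding small_path_components_def by metis
      have Nt: "None \<in> topspace ?X" using topspace_hh[OF ds] by (simp add: hedgehog_carrier_def)
      have "openin ?X {x \<in> topspace ?X. f x \<in> W}" using f W(1) unfolding continuous_map_def by blast
      moreover have "None \<in> {x \<in> topspace ?X. f x \<in> W}" using Nt W(2) fe by simp
      ultimately obtain t where t: "t \<in> S"
        "\<forall>s\<in>S. (le t s \<and> \<not> le s t) \<longrightarrow> spike_pt s ` {0..1} \<subseteq> {x \<in> topspace ?X. f x \<in> W}"
        unfolding openin_hh[OF ds] hh_open_def by blast
      show "\<exists>t\<in>S. \<forall>s\<in>S. (le t s \<and> \<not> le s t) \<longrightarrow> spike_pt s ` {0..1} \<subseteq> {x \<in> topspace ?X. G x \<in> Q}"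
      proof (intro bexI[OF _ t(1)] ballI impI subsetI)
        fix s y assume s: "s \<in> S" "le t s \<and> \<not> le s t" and y: "y \<in> spike_pt s ` {0..1}"
        then obtain u where u: "u \<in> {0..1}" "y = spike_pt s u" by blast
        have fW: "f (spike_pt s v) \<in> W" if "v \<in> {0..1}" for v
          using t(2) s that by blast
        define \<gamma> where "\<gamma> v = L s (u * v)" for v
        have mc: "continuous_map I01 I01 (\<lambda>v. u * v)"
          using u by (auto simp: continuous_on_mult_left mult_le_one)
        have c\<gamma>: "continuous_map I01 E \<gamma>"
          unfolding \<gamma>_def using continuous_map_compose[OF mc L(1)[OF s(1)]] by (simp add: o_def)
        have "pathin (subtopology E {e\<in>topspace E. p e \<in> V}) \<gamma>"
          unfolding pathin_def continuous_map_in_subtopology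
        proof (intro conjI c\<gamma> funcsetI)
          fix v assume v: "v \<in> topspace (subtopology euclideanreal {0..1})"
          then have uv: "u * v \<in> {0..1}" using u by (auto simp: mult_le_one)
          have "\<gamma> v \<in> topspace E" using cmap_in_top[OF c\<gamma>] v by simp
          moreover have "p (\<gamma> v) \<in> V" using L(2)[OF s(1) uv] fW[OF uv] W(3) unfolding \<gamma>_def by auto
          ultimately show "\<gamma> v \<in> {e \<in> topspace E. p e \<in> V}" by simp
        qed
        moreover have "\<gamma> 0 = e" "\<gamma> 1 = L s u" using L(3)[OF s(1)] by (auto simp: \<gamma>_def)
        ultimately have "L s u \<in> path_component_of_set (subtopology E {e\<in>topspace E. p e \<in> V}) e"
          unfolding path_component_of_def by auto
        then have "L s u \<in> Q" using pc by blast
        then show "y \<in> {x \<in> topspace ?X. G x \<in> Q}"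
          using u Gs[OF s(1) u(1)] spike_in_carrier[OF s(1) u(1)] topspace_hh[OF ds] by auto
      qed
    qed
  qed
  show ?thesis using Gcont Glift GN by blast
qed

lemma hh_lift:
  assumes ac: "arc_covering E B p" and sp: "small_path_components E B p"
    and ds: "directed_set S le"
    and f: "continuous_map (arc_hedgehog S le) B f"
    and e: "e \<in> topspace E" and x0: "x0 \<in> topspace (arc_hedgehog S le)" and fe: "f x0 = p e"
  shows "\<exists>g. continuous_map (arc_hedgehog S le) E g \<and>
             (\<forall>x\<in>topspace (arc_hedgehog S le). p (g x) = f x) \<and> g x0 = e"
proof (cases "x0 = None")
  case True then show ?thesis using hh_lift_base[OF ac sp ds f e] fe by simp
next
  case False
  then obtain s u where 2: "s \<in> S" "u \<in> {0<..1}" "x0 = spike_pt s u"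
    using x0 unfolding topspace_hh[OF ds] by (auto elim: carrier_cases)
  have s: "s \<in> S" and u: "u \<in> {0..1}" using 2 by auto
  have cf: "continuous_map I01 B (f \<circ> spike_pt s)"
    by (rule continuous_map_compose[OF spike_cont[OF ds s] f])
  obtain l where l: "continuous_map I01 E l" "\<forall>v\<in>{0..1}. p (l v) = (f \<circ> spike_pt s) v" "l u = e"
    using arc_lift[OF ac e u cf] fe 2 by auto
  have e1: "l 0 \<in> topspace E" using cmap_in_top[OF l(1)] by simp
  have fe1: "p (l 0) = f None" using l(2) by (simp add: spike0)
  obtain G where G: "continuous_map (arc_hedgehog S le) E G"
      "\<forall>x\<in>topspace (arc_hedgehog S le). p (G x) = f x" "G None = l 0"
    using hh_lift_base[OF ac sp ds f e1 fe1] by blast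
  have cG: "continuous_map I01 E (G \<circ> spike_pt s)"
    by (rule continuous_map_compose[OF spike_cont[OF ds s] G(1)])
  have "\<forall>v\<in>{0..1}. p ((G \<circ> spike_pt s) v) = p (l v)"
    using G(2) l(2) spike_in_carrier[OF s] topspace_hh[OF ds] by auto
  from arc_uniq[OF ac cG l(1) this _ _ u, of 0] G(3)
  have "G (spike_pt s u) = e" using l(3) by (simp add: spike0)
  then show ?thesis using G 2 by blast
qed

lemma b_to_a:
  assumes ac: "arc_covering E B p" and sp: "small_path_components E B p"
  shows "arc_hedgehog_covering TYPE('s) E B p"
  unfolding arc_hedgehog_covering_def P_covering_def
proof (intro conjI ballI allI impI)
  show "continuous_map E B p" using arc_cont[OF ac] .
next
  fix e0 X x0 f
  assume e0: "e0 \<in> topspace E" and X: "X \<in> {arc_hedgehog S le |(S::'s set) le. directed_set S le}"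
    and x0: "x0 \<in> topspace X" and f: "continuous_map X B f \<and> f x0 = p e0"
  from X obtain S le where ds: "directed_set (S::'s set) le" and XS: "X = arc_hedgehog S le" by blast
  show "\<exists>g. continuous_map X E g \<and> (\<forall>x\<in>topspace X. p (g x) = f x) \<and> g x0 = e0"
    using hh_lift[OF ac sp ds _ e0] f x0 XS by blast
next
  fix X g h x
  assume X: "X \<in> {arc_hedgehog S le |(S::'s set) le. directed_set S le}"
    and H: "continuous_map X E g \<and> continuous_map X E h \<and> (\<forall>x\<in>topspace X. p (g x) = p (h x)) \<and>
       (\<exists>x0\<in>topspace X. g x0 = h x0)" and x: "x \<in> topspace X"
  from X obtain S le where ds: "directed_set (S::'s set) le" and XS: "X = arc_hedgehog S le" by blast
  from H obtain x0 where "x0 \<in> topspace X" "g x0 = h x0" by blast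
  then show "g x = h x" using hh_uniq[OF ac ds, of g h x0 x] H x XS by blast
qed

lemma open01: "openin (top_of_set {0..1::real}) {0<..1}"
  by (simp add: greaterThanAtMost_eq_atLeastAtMost_diff openin_delete)

lemma sin2_01: "(sin x)^2 \<in> {0..1::real}"
proof -
  have "sin x ^2 + cos x ^2 = 1" by (rule sin_cos_squared_add)
  moreover have "0 \<le> cos x ^2" "0 \<le> sin x ^2" by simp_all
  ultimately have "sin x ^2 \<le> 1" "0 \<le> sin x ^2" by linarith+
  then show ?thesis by simp
qed

lemma small_pts:
  assumes "openin (top_of_set {0..1::real}) A" "0 \<in> A"
  shows "\<exists>n::nat. n > 0 \<and> (\<forall>u\<in>{0..1}. u \<le> 1 / real n \<longrightarrow> u \<in> A)"
proof -
  obtain d where d: "d > 0" "\<forall>x'\<in>{0..1}. dist x' 0 < d \<longrightarrow> x' \<in> A"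
    using assms unfolding openin_euclidean_subtopology_iff by blast
  obtain n :: nat where n: "n > 0" "inverse (real n) < d" using ex_inverse_of_nat_less[OF d(1)] by blast
  show ?thesis
  proof (intro exI conjI ballI impI)
    show "n > 0" by (rule n(1))
    fix u :: real assume u: "u \<in> {0..1}" "u \<le> 1 / real n"
    then have "dist u 0 < d" using n(2) by (auto simp: dist_real_def divide_inverse)
    then show "u \<in> A" using d(2) u by blast
  qed
qed

lemma phi_cont: "continuous_map (top_of_set {0<..1}) (top_of_set {0..1::real}) (\<lambda>u. (sin (pi / u))^2)"
  unfolding continuous_map_subtopology_eu
proof
  show "continuous_on {0<..1} (\<lambda>u. (sin (pi / u))\<^sup>2)"
    by (intro continuous_intros) auto
  show "(\<lambda>u. (sin (pi / u))\<^sup>2) \<in> {0<..1} \<rightarrow> {0..1}" using sin2_01 by blast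
qed

lemma phi_at0: "n > 0 \<Longrightarrow> (sin (pi / (1 / real n)))^2 = 0"
proof -
  assume "n > 0"
  have "pi / (1 / real n) = real n * pi" by simp
  then show ?thesis by (simp add: sin_npi)
qed

lemma phi_at1: "(sin (pi / (2 / (4 * real n + 1))))^2 = 1"
proof -
  have "pi / (2 / (4 * real n + 1)) = real (2*n) * pi + pi / 2" by (simp add: field_simps)
  moreover have "sin (real (2*n) * pi + pi / 2) = 1"
    by (simp only: sin_add sin_npi cos_npi) simp
  ultimately show ?thesis by (simp only:) simp
qed

lemma minimal_case:
  assumes ac: "arc_covering E B p" and e0: "e0 \<in> topspace E"
    and tQ: "\<And>Q. openin B Q \<Longrightarrow> p e0 \<in> Q \<Longrightarrow> t \<subseteq> Q"
    and \<alpha>: "pathin (subtopology E {e\<in>topspace E. p e \<in> t}) \<alpha>" and \<alpha>0: "\<alpha> 0 = e0"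
    and U: "openin E U" "e0 \<in> U"
  shows "\<alpha> 1 \<in> U"
proof -
  have \<alpha>c: "continuous_map I01 E \<alpha>" and \<alpha>t': "\<alpha> \<in> {0..1} \<rightarrow> {e\<in>topspace E. p e \<in> t}"
    using \<alpha> unfolding pathin_def continuous_map_in_subtopology by auto
  then have \<alpha>t: "p (\<alpha> v) \<in> t" "\<alpha> v \<in> topspace E" if "v \<in> {0..1}" for v
    using that by auto
  define \<phi> where "\<phi> u = (sin (pi / u))^2" for u :: real
  have \<phi>01: "\<phi> u \<in> {0..1}" for u unfolding \<phi>_def by (rule sin2_01)
  have pc: "continuous_map E B p" by (rule arc_cont[OF ac])
  have \<phi>c: "continuous_map (top_of_set {0<..1}) I01 \<phi>"
    unfolding \<phi>_def by (rule phi_cont)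
  have Hc: "continuous_map (top_of_set {0<..1}) B (\<lambda>u. p (\<alpha> (\<phi> u)))"
    using continuous_map_compose[OF continuous_map_compose[OF \<phi>c \<alpha>c] pc] by (simp add: o_def)
  define F where "F u = (if u = 0 then p e0 else p (\<alpha> (\<phi> u)))" for u
  have Fc: "continuous_map I01 B F"
    unfolding continuous_map_def
  proof (intro conjI allI impI funcsetI)
    fix u assume "u \<in> topspace I01"
    then show "F u \<in> topspace B"
      using cmap_in_top[OF pc e0] cmap_in_top[OF pc \<alpha>t(2)[OF \<phi>01]] by (simp add: F_def)
  next
    fix Q assume Q: "openin B Q"
    show "openin I01 {u \<in> topspace I01. F u \<in> Q}"
    proof (cases "p e0 \<in> Q")
      case True
      then have "t \<subseteq> Q" using tQ Q by blast
      then have "{u \<in> topspace I01. F u \<in> Q} = topspace I01"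
        using True \<alpha>t(1)[OF \<phi>01] by (auto simp: F_def)
      then show ?thesis by simp
    next
      case False
      then have "{u \<in> topspace I01. F u \<in> Q} = {u \<in> topspace (top_of_set {0<..1}). p (\<alpha> (\<phi> u)) \<in> Q}"
        by (auto simp: F_def)
      moreover have "openin (top_of_set {0<..1}) {u \<in> topspace (top_of_set {0<..1}). p (\<alpha> (\<phi> u)) \<in> Q}"
        using Hc Q unfolding continuous_map_def by blast
      ultimately show ?thesis using openin_trans[OF _ open01] by simp
    qed
  qed
  have \<phi>1: "\<phi> 1 = 0" by (simp add: \<phi>_def)
  have F1: "F 1 = p e0" using \<alpha>0 by (simp add: F_def \<phi>1)
  obtain g where g: "continuous_map I01 E g" "\<forall>x\<in>{0..1}. p (g x) = F x" "g 1 = e0"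
    using arc_lift[OF ac e0 _ Fc F1] by auto
  have g\<alpha>: "g c = \<alpha> (\<phi> c)" if c: "c \<in> {0<..1}" for c
  proof -
    define r where "r v = c + (1 - c) * v" for v
    have rin: "r v \<in> {0<..1}" if "v \<in> {0..1}" for v
    proof -
      have "(1 - c) * v \<le> (1 - c) * 1" using c that by (intro mult_left_mono) auto
      moreover have "0 \<le> (1 - c) * v" using c that by auto
      ultimately show ?thesis using c by (auto simp: r_def)
    qed
    have rc': "continuous_map I01 (top_of_set {0<..1}) r"
      unfolding continuous_map_subtopology_eu
    proof
      show "continuous_on {0..1} r" unfolding r_def by (intro continuous_intros)
      show "r \<in> {0..1} \<rightarrow> {0<..1}" using rin by blast
    qed
    have rc: "continuous_map I01 I01 r"
      unfolding continuous_map_subtopology_eu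
    proof
      show "continuous_on {0..1} r" unfolding r_def by (intro continuous_intros)
      show "r \<in> {0..1} \<rightarrow> {0..1}" using rin by fastforce
    qed
    have h1: "continuous_map I01 E (g \<circ> r)" by (rule continuous_map_compose[OF rc g(1)])
    have h2: "continuous_map I01 E (\<alpha> \<circ> \<phi> \<circ> r)"
      by (rule continuous_map_compose[OF rc' continuous_map_compose[OF \<phi>c \<alpha>c]])
    have peq: "\<forall>v\<in>{0..1}. p ((g \<circ> r) v) = p ((\<alpha> \<circ> \<phi> \<circ> r) v)"
    proof
      fix v :: real assume v: "v \<in> {0..1}"
      have "r v \<in> {0..1}" "r v \<noteq> 0" using rin[OF v] by auto
      then show "p ((g \<circ> r) v) = p ((\<alpha> \<circ> \<phi> \<circ> r) v)" using g(2) by (simp add: F_def)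
    qed
    have r1: "r 1 = 1" "r 0 = c" by (simp_all add: r_def)
    have "(g \<circ> r) 1 = (\<alpha> \<circ> \<phi> \<circ> r) 1" using r1 g(3) \<alpha>0 \<phi>1 by simp
    from arc_uniq[OF ac h1 h2 peq _ this, of 0] show ?thesis using r1 by simp
  qed
  have pg0: "p (g 0) = p e0" using g(2) by (simp add: F_def)
  have g0t: "g 0 \<in> topspace E" using cmap_in_top[OF g(1)] by simp
  have ge1: "g (1 / real n) = e0" if "n > 0" for n
  proof -
    have "1 / real n \<in> {0<..1}" using that by auto
    then show ?thesis using g\<alpha> \<alpha>0 phi_at0[OF that] unfolding \<phi>_def by simp
  qed
  have gQ: "\<exists>n::nat. n > 0 \<and> (\<forall>u\<in>{0..1}. u \<le> 1 / real n \<longrightarrow> g u \<in> Q)"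
    if "openin E Q" "g 0 \<in> Q" for Q
  proof -
    have "openin I01 {u \<in> topspace I01. g u \<in> Q}" using g(1) that(1) unfolding continuous_map_def by blast
    from small_pts[OF this[simplified]] that(2) show ?thesis by auto
  qed
  have eq: "g 0 = e0"
  proof -
    define k where "k u = (if u = 0 then g 0 else e0)" for u :: real
    have kc: "continuous_map I01 E k"
      unfolding continuous_map_def
    proof (intro conjI allI impI funcsetI)
      fix u assume "u \<in> topspace I01"
      then show "k u \<in> topspace E" using g0t e0 by (simp add: k_def)
    next
      fix Q assume Q: "openin E Q"
      show "openin I01 {u \<in> topspace I01. k u \<in> Q}"
      proof (cases "g 0 \<in> Q")
        case True
        then obtain n :: nat where n: "n > 0" "\<forall>u\<in>{0..1}. u \<le> 1 / real n \<longrightarrow> g u \<in> Q"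
          using gQ Q by blast
        have "1 / real n \<in> {0..1}" using n(1) by auto
        then have "e0 \<in> Q" using n ge1[OF n(1)] by force
        then have "{u \<in> topspace I01. k u \<in> Q} = topspace I01" using True by (auto simp: k_def)
        then show ?thesis by simp
      next
        case False
        show ?thesis
        proof (cases "e0 \<in> Q")
          case True
          then have "{u \<in> topspace I01. k u \<in> Q} = {0<..1}" using False by (auto simp: k_def)
          then show ?thesis using open01 by simp
        next
          case F2: False
          then have "{u \<in> topspace I01. k u \<in> Q} = {}" using False by (auto simp: k_def)
          then show ?thesis by (metis openin_empty)
        qed
      qed
    qed
    have cc: "continuous_map I01 E (\<lambda>u. g 0)" using g0t by simp
    have "\<forall>x\<in>{0..1}. p (k x) = p (g 0)" using pg0 by (simp add: k_def)
    from arc_uniq[OF ac kc cc this, of 0 1] show ?thesis by (simp add: k_def)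
  qed
  obtain n :: nat where n: "n > 0" "\<forall>u\<in>{0..1}. u \<le> 1 / real n \<longrightarrow> g u \<in> U"
    using gQ[OF U(1)] eq U(2) by auto
  define u where "u = 2 / (4 * real n + 1)"
  have u01: "u \<in> {0<..1}" using n(1) by (auto simp: u_def)
  have "u \<le> 1 / real n" using n(1) by (auto simp: u_def field_simps)
  then have "g u \<in> U" using n(2) u01 by auto
  moreover have "g u = \<alpha> 1" using g\<alpha>[OF u01] phi_at1[of n] unfolding \<phi>_def u_def by simp
  ultimately show ?thesis by simp
qed

lemma a_to_b:
  fixes E :: "'e topology" and B :: "'b topology" and p :: "'e \<Rightarrow> 'b"
  assumes ac: "arc_covering E B p" and hc: "arc_hedgehog_covering TYPE('b set) E B p"
  shows "small_path_components E B p"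
  unfolding small_path_components_def
proof (intro ballI allI impI)
  fix e0 U assume e0: "e0 \<in> topspace E" and U: "openin E U \<and> e0 \<in> U"
  show "\<exists>V. (\<exists>W. openin B W \<and> p e0 \<in> W \<and> W \<subseteq> V) \<and> V \<subseteq> topspace B \<and>
             path_component_of_set (subtopology E {e\<in>topspace E. p e \<in> V}) e0 \<subseteq> U"
  proof (rule ccontr)
    assume nb: "\<not> ?thesis"
    define SS where "SS = {W. openin B W \<and> p e0 \<in> W}"
    have bad: "\<exists>\<alpha>. pathin (subtopology E {e\<in>topspace E. p e \<in> W}) \<alpha> \<and> \<alpha> 0 = e0 \<and> \<alpha> 1 \<notin> U"
      if W: "W \<in> SS" for W
    proof -
      have "openin B W" "p e0 \<in> W" using W by (auto simp: SS_def)
      then have "\<not> path_component_of_set (subtopology E {e\<in>topspace E. p e \<in> W}) e0 \<subseteq> U"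
        using nb openin_subset[of B W] by blast
      then show ?thesis unfolding path_component_of_def by blast
    qed
    then obtain A where A: "\<And>W. W \<in> SS \<Longrightarrow> pathin (subtopology E {e\<in>topspace E. p e \<in> W}) (A W)"
      "\<And>W. W \<in> SS \<Longrightarrow> A W 0 = e0" "\<And>W. W \<in> SS \<Longrightarrow> A W 1 \<notin> U"
      by metis
    have Ac: "continuous_map I01 E (A W)" and At: "\<And>v. v \<in> {0..1} \<Longrightarrow> p (A W v) \<in> W \<and> A W v \<in> topspace E"
      if "W \<in> SS" for W
      using A(1)[OF that] unfolding pathin_def continuous_map_in_subtopology by auto
    have pc: "continuous_map E B p" by (rule arc_cont[OF ac])
    show False
    proof (cases "\<exists>t\<in>SS. \<forall>s\<in>SS. s \<subseteq> t \<longrightarrow> s = t")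
      case True
      then obtain t where t: "t \<in> SS" "\<forall>s\<in>SS. s \<subseteq> t \<longrightarrow> s = t" by blast
      have tQ: "t \<subseteq> Q" if "openin B Q" "p e0 \<in> Q" for Q
      proof -
        have "t \<inter> Q \<in> SS" using t(1) that by (auto simp: SS_def)
        then have "t \<inter> Q = t" using t(2) by blast
        then show ?thesis by blast
      qed
      have "A t 1 \<in> U" using minimal_case[OF ac e0 tQ A(1)[OF t(1)] A(2)[OF t(1)]] U by blast
      then show False using A(3)[OF t(1)] by blast
    next
      case False
      then have nm: "\<forall>t\<in>SS. \<exists>s\<in>SS. s \<subseteq> t \<and> s \<noteq> t" by blast
      define le where "le V W = (W \<subseteq> V)" for V W :: "'b set"
      have topB: "topspace B \<in> SS" using cmap_in_top[OF pc e0] by (simp add: SS_def)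
      have ds: "directed_set SS le"
        unfolding directed_set_def le_def
      proof (intro conjI ballI)
        show "SS \<noteq> {}" using topB by blast
        fix a b assume "a \<in> SS" "b \<in> SS"
        then have "a \<inter> b \<in> SS" by (auto simp: SS_def)
        then show "\<exists>c\<in>SS. c \<subseteq> a \<and> c \<subseteq> b" by blast
      qed auto
      let ?X = "arc_hedgehog SS le"
      define f where "f x = (case x of None \<Rightarrow> p e0 | Some (W, u) \<Rightarrow> p (A W u))" for x
      have fs: "f (spike_pt W u) = p (A W u)" if "W \<in> SS" "u \<in> {0..1}" for W u
        using A(2)[OF that(1)] by (auto simp: f_def spike_pt_def)
      have fc: "continuous_map ?X B f"
        unfolding continuous_map_def
      proof (intro conjI allI impI funcsetI)
        fix x assume "x \<in> topspace ?X"
        then show "f x \<in> topspace B" unfolding topspace_hh[OF ds]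
        proof (cases rule: carrier_cases)
          case 1 then show ?thesis using cmap_in_top[OF pc e0] by (simp add: f_def)
        next
          case (2 s u) then show ?thesis using fs[of s u] cmap_in_top[OF pc] At[of s u] by auto
        qed
      next
        fix Q assume Q: "openin B Q"
        show "openin ?X {x \<in> topspace ?X. f x \<in> Q}"
          unfolding openin_hh[OF ds] hh_open_def
        proof (intro conjI ballI impI)
          show "{x \<in> topspace ?X. f x \<in> Q} \<subseteq> hedgehog_carrier SS" using topspace_hh[OF ds] by blast
          fix s assume s: "s \<in> SS"
          have "{t \<in> {0..1}. spike_pt s t \<in> {x \<in> topspace ?X. f x \<in> Q}} = {v \<in> topspace I01. (p \<circ> A s) v \<in> Q}"
            using fs[OF s] spike_in_carrier[OF s] topspace_hh[OF ds] by auto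
          moreover have "openin I01 {v \<in> topspace I01. (p \<circ> A s) v \<in> Q}"
            using continuous_map_compose[OF Ac[OF s] pc] Q unfolding continuous_map_def by blast
          ultimately show "openin I01 {t \<in> {0..1}. spike_pt s t \<in> {x \<in> topspace ?X. f x \<in> Q}}"
            by simp
        next
          assume "None \<in> {x \<in> topspace ?X. f x \<in> Q}"
          then have QS: "Q \<in> SS" using Q by (simp add: f_def SS_def)
          show "\<exists>t\<in>SS. \<forall>s\<in>SS. (le t s \<and> \<not> le s t) \<longrightarrow> spike_pt s ` {0..1} \<subseteq> {x \<in> topspace ?X. f x \<in> Q}"
          proof (intro bexI[OF _ QS] ballI impI subsetI)
            fix s y assume s: "s \<in> SS" "le Q s \<and> \<not> le s Q" and y: "y \<in> spike_pt s ` {0..1}"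
            then obtain u where u: "u \<in> {0..1}" "y = spike_pt s u" by blast
            have "f y \<in> Q" using fs[OF s(1) u(1)] At[OF s(1) u(1)] s(2) u(2) by (auto simp: le_def)
            then show "y \<in> {x \<in> topspace ?X. f x \<in> Q}"
              using u spike_in_carrier[OF s(1) u(1)] topspace_hh[OF ds] by auto
          qed
        qed
      qed
      have Nt: "None \<in> topspace ?X" using topspace_hh[OF ds] by (simp add: hedgehog_carrier_def)
      have "\<exists>g. continuous_map ?X E g \<and> (\<forall>x\<in>topspace ?X. p (g x) = f x) \<and> g None = e0"
      proof -
        have "\<forall>e0\<in>topspace E. \<forall>X\<in>{arc_hedgehog S le |(S :: 'b set set) le. directed_set S le}. \<forall>x0\<in>topspace X. \<forall>f.
          continuous_map X B f \<and> f x0 = p e0 \<longrightarrow>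
          (\<exists>g. continuous_map X E g \<and> (\<forall>x\<in>topspace X. p (g x) = f x) \<and> g x0 = e0)"
          using hc unfolding arc_hedgehog_covering_def P_covering_def by blast
        moreover have "?X \<in> {arc_hedgehog S le |(S :: 'b set set) le. directed_set S le}" using ds by blast
        moreover have "f None = p e0" by (simp add: f_def)
        ultimately show ?thesis using e0 Nt fc by blast
      qed
      then obtain g where g: "continuous_map ?X E g" "\<forall>x\<in>topspace ?X. p (g x) = f x" "g None = e0"
        by blast
      have gA: "g (spike_pt W 1) = A W 1" if W: "W \<in> SS" for W
      proof -
        have c1: "continuous_map I01 E (g \<circ> spike_pt W)"
          by (rule continuous_map_compose[OF spike_cont[OF ds W] g(1)])
        have "\<forall>x\<in>{0..1}. p ((g \<circ> spike_pt W) x) = p (A W x)"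
          using g(2) fs[OF W] spike_in_carrier[OF W] topspace_hh[OF ds] by auto
        from arc_uniq[OF ac c1 Ac[OF W] this, of 0 1] show ?thesis
          using g(3) A(2)[OF W] by (simp add: spike0)
      qed
      have "openin ?X {x \<in> topspace ?X. g x \<in> U}" using g(1) U unfolding continuous_map_def by blast
      moreover have "None \<in> {x \<in> topspace ?X. g x \<in> U}" using Nt g(3) U by simp
      ultimately obtain t where t: "t \<in> SS"
        "\<forall>s\<in>SS. (le t s \<and> \<not> le s t) \<longrightarrow> spike_pt s ` {0..1} \<subseteq> {x \<in> topspace ?X. g x \<in> U}"
        unfolding openin_hh[OF ds] hh_open_def by blast
      obtain s where s: "s \<in> SS" "s \<subseteq> t" "s \<noteq> t" using nm t(1) by blast
      then have "le t s \<and> \<not> le s t" by (auto simp: le_def)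
      then have "spike_pt s ` {0..1} \<subseteq> {x \<in> topspace ?X. g x \<in> U}" using t(2) s(1) by blast
      moreover have "spike_pt s 1 \<in> spike_pt s ` {0..1}" by simp
      ultimately have "spike_pt s 1 \<in> {x \<in> topspace ?X. g x \<in> U}" by blast
      then have "A s 1 \<in> U" using gA[OF s(1)] by simp
      then show False using A(3)[OF s(1)] by blast
    qed
  qed
qed

theorem theorem3p5:
  fixes E :: "'e topology" and B :: "'b topology" and p :: "'e \<Rightarrow> 'b"
  assumes "arc_covering E B p"
  shows "(arc_hedgehog_covering TYPE('b set) E B p \<longleftrightarrow> small_path_components E B p) \<and>
         (small_path_components E B p \<longrightarrow> arc_hedgehog_covering TYPE('s) E B p)"
proof -
  have 1: "small_path_components E B p \<Longrightarrow> arc_hedgehog_covering TYPE('b set) E B p"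
    by (rule b_to_a[OF assms])
  have 2: "small_path_components E B p \<Longrightarrow> arc_hedgehog_covering TYPE('s) E B p"
    by (rule b_to_a[OF assms])
  show ?thesis using a_to_b[OF assms] 1 2 by blast
qed

end
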